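(* Let $r$ and $d$ be positive integers, $\operatorname{Tv}(d,r)=(d+1)(r-1)+1$, and let $S\subset\mathbb{R}^d$ be a set of $n>\operatorname{Tv}(d,r)$ points. Then the clique number of the Tverberg $r$-partition graph satisfies $\omega(G_T[S,r])=r$.
   Context: A partition of a finite set $S$ into $r$ parts is a collection of $r$ nonempty pairwise disjoint subsets $P_1,\dots,P_r$ (unordered) whose union is $S$. For a finite $S\subset\mathbb{R}^d$, a Tverberg partition of $S$ into $r$ parts is such a partition with $\bigcap_{j=1}^r\operatorname{conv}(P_j)\neq\emptyset$. For two partitions $P,P'$ of $S$, the partition distance $D(P,P')$ is the minimum number of elements of $S$ that must be removed so that $P$ and $P'$ restricted to the remaining elements coincide. The Tverberg $r$-partition graph $G_T[S,r]$ has as vertices all Tverberg partitions of $S$ into $r$ parts, with an edge between $P$ and $P'$ if and only if $D(P,P')=1$. The clique number $\omega(G)$ is the number of vertices of a largest complete subgraph of $G$. *)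

theory Defs
  imports "HOL-Analysis.Analysis" "HOL-Library.Disjoint_Sets"
begin

definition Tv :: "nat \<Rightarrow> nat \<Rightarrow> nat" where
  "Tv d r = (d + 1) * (r - 1) + 1"

definition partition_into :: "'a set \<Rightarrow> nat \<Rightarrow> 'a set set \<Rightarrow> bool" where
  "partition_into S r P \<longleftrightarrow> partition_on S P \<and> card P = r"

definition tverberg_partition :: "('a::real_vector) set \<Rightarrow> nat \<Rightarrow> 'a set set \<Rightarrow> bool" where
  "tverberg_partition S r P \<longleftrightarrow> partition_into S r P \<and> (\<Inter>B\<in>P. convex hull B) \<noteq> {}"

definition restrict_partition :: "'a set set \<Rightarrow> 'a set \<Rightarrow> 'a set set" where
  "restrict_partition P T = (\<lambda>B. B \<inter> T) ` P - {{}}"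

definition partition_distance :: "'a set \<Rightarrow> 'a set set \<Rightarrow> 'a set set \<Rightarrow> nat" where
  "partition_distance S P P' =
     Min {card X | X. X \<subseteq> S \<and> restrict_partition P (S - X) = restrict_partition P' (S - X)}"

definition tverberg_vertices :: "('a::real_vector) set \<Rightarrow> nat \<Rightarrow> 'a set set set" where
  "tverberg_vertices S r = {P. tverberg_partition S r P}"

definition tverberg_adj :: "'a set \<Rightarrow> 'a set set \<Rightarrow> 'a set set \<Rightarrow> bool" where
  "tverberg_adj S P P' \<longleftrightarrow> partition_distance S P P' = 1"

definition clique_number :: "'v set \<Rightarrow> ('v \<Rightarrow> 'v \<Rightarrow> bool) \<Rightarrow> nat" where
  "clique_number V adj =
     Max {card C | C. C \<subseteq> V \<and> (\<forall>x\<in>C. \<forall>y\<in>C. x \<noteq> y \<longrightarrow> adj x y)}"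

end

theory Submission
  imports Defs
begin

definition stdsimp :: "'i set \<Rightarrow> ('i \<Rightarrow> real) set" where
  "stdsimp I = {lam. (\<forall>i\<in>I. 0 \<le> lam i) \<and> (\<forall>i. i \<notin> I \<longrightarrow> lam i = 0) \<and> sum lam I = 1}"

lemma stdsimp_compact:
  fixes I :: "'i set"
  assumes "finite I"
  shows "compact (stdsimp I)"
proof -
  define B where "B = PiE UNIV (\<lambda>i. if i \<in> I then {0..1::real} else {0})"
  have "compactin (product_topology (\<lambda>i. euclidean) UNIV) B"
    unfolding B_def by (subst compactin_PiE) auto
  hence cB: "compact B" by (simp add: euclidean_product_topology)
  have cl: "closed {lam::'i\<Rightarrow>real. sum lam I = 1}"
    by (intro closed_Collect_eq continuous_on_sum continuous_on_product_coordinates continuous_on_const)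
  have "stdsimp I = B \<inter> {lam. sum lam I = 1}"
  proof (rule set_eqI, rule iffI)
    fix lam assume "lam \<in> stdsimp I"
    hence h: "\<forall>i\<in>I. 0 \<le> lam i" "\<forall>i. i \<notin> I \<longrightarrow> lam i = 0" "sum lam I = 1"
      by (auto simp: stdsimp_def)
    have "lam i \<le> 1" if "i \<in> I" for i
      using member_le_sum[of i I lam] h that assms by auto
    thus "lam \<in> B \<inter> {lam. sum lam I = 1}" using h by (auto simp: B_def)
  next
    fix lam assume "lam \<in> B \<inter> {lam. sum lam I = 1}"
    thus "lam \<in> stdsimp I" by (auto simp: B_def stdsimp_def PiE_iff split: if_splits)
  qed
  thus ?thesis using cB cl by (simp add: compact_Int_closed)
qed

lemma lin_dep:
  fixes v :: "'i \<Rightarrow> 'k \<Rightarrow> real"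
  assumes "finite K" "finite I" "card K < card I"
  shows "\<exists>mu. (\<exists>i\<in>I. mu i \<noteq> 0) \<and> (\<forall>k\<in>K. (\<Sum>i\<in>I. mu i * v i k) = 0)"
  using assms
proof (induction K arbitrary: I v rule: finite_induct)
  case empty
  then obtain i where "i \<in> I" by fastforce
  thus ?case by (intro exI[of _ "\<lambda>_. 1"]) auto
next
  case (insert k K)
  show ?case
  proof (cases "\<forall>i\<in>I. v i k = 0")
    case True
    from insert.IH[of I v] insert.prems insert.hyps obtain mu where
      "\<exists>i\<in>I. mu i \<noteq> 0" "\<forall>k\<in>K. (\<Sum>i\<in>I. mu i * v i k) = 0" by auto
    thus ?thesis using True by (intro exI[of _ mu]) auto
  next
    case False
    then obtain i0 where i0: "i0 \<in> I" "v i0 k \<noteq> 0" by auto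
    define I' where "I' = I - {i0}"
    define v' where "v' = (\<lambda>i k'. v i k' - (v i k / v i0 k) * v i0 k')"
    have cI': "card K < card I'" using insert.prems insert.hyps i0 by (simp add: I'_def)
    from insert.IH[of I' v'] insert.prems cI' obtain mu' where
      mu': "\<exists>i\<in>I'. mu' i \<noteq> 0" "\<forall>k\<in>K. (\<Sum>i\<in>I'. mu' i * v' i k) = 0"
      by (auto simp: I'_def)
    define c where "c = (\<Sum>i\<in>I'. mu' i * v i k)"
    define mu where "mu = mu'(i0 := - c / v i0 k)"
    have fI': "finite I'" using insert.prems by (simp add: I'_def)
    have i0n: "i0 \<notin> I'" by (simp add: I'_def)
    have splitI: "I = insert i0 I'" using i0 by (auto simp: I'_def)
    have eq: "(\<Sum>i\<in>I. mu i * v i k'') = - c / v i0 k * v i0 k'' + (\<Sum>i\<in>I'. mu' i * v i k'')" for k''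
    proof -
      have "(\<Sum>i\<in>I'. mu i * v i k'') = (\<Sum>i\<in>I'. mu' i * v i k'')"
        by (intro sum.cong) (auto simp: mu_def i0n)
      thus ?thesis by (simp add: splitI fI' i0n mu_def)
    qed
    have "(\<Sum>i\<in>I. mu i * v i k'') = 0" if "k'' \<in> insert k K" for k''
    proof (cases "k'' = k")
      case True
      thus ?thesis using eq[of k] i0 by (simp add: c_def)
    next
      case False
      hence kK: "k'' \<in> K" using that by auto
      have "(\<Sum>i\<in>I'. mu' i * v' i k'') = (\<Sum>i\<in>I'. mu' i * v i k'') - c / v i0 k * v i0 k''"
        by (simp add: v'_def c_def right_diff_distrib sum_subtractf sum_distrib_right sum_distrib_left sum_divide_distrib algebra_simps)
      thus ?thesis using mu'(2) kK eq[of k''] by simp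
    qed
    moreover have "\<exists>i\<in>I. mu i \<noteq> 0" using mu'(1) i0n by (auto simp: mu_def I'_def)
    ultimately show ?thesis by blast
  qed
qed

lemma cc_key:
  fixes h :: "'i \<Rightarrow> 'k \<Rightarrow> real"
  assumes fI: "finite I" and fK: "finite K" and i0: "i0 \<in> I" and lam: "lam \<in> stdsimp I"
    and min: "\<forall>lam'\<in>stdsimp I. (\<Sum>k\<in>K. (\<Sum>i\<in>I. lam i * h i k)\<^sup>2) \<le> (\<Sum>k\<in>K. (\<Sum>i\<in>I. lam' i * h i k)\<^sup>2)"
  shows "(\<Sum>k\<in>K. (\<Sum>i\<in>I. lam i * h i k) * h i0 k) \<ge> (\<Sum>k\<in>K. (\<Sum>i\<in>I. lam i * h i k)\<^sup>2)"
proof (rule ccontr)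
  define x where "x = (\<lambda>k. \<Sum>i\<in>I. lam i * h i k)"
  define d where "d = (\<lambda>k. h i0 k - x k)"
  define m where "m = (\<Sum>k\<in>K. (x k)\<^sup>2)"
  define q where "q = (\<Sum>k\<in>K. (d k)\<^sup>2)"
  define a where "a = m - (\<Sum>k\<in>K. x k * h i0 k)"
  assume "\<not> ?thesis"
  hence apos: "a > 0" by (simp add: a_def m_def x_def)
  have qnn: "q \<ge> 0" by (simp add: q_def sum_nonneg)
  define t where "t = min 1 (a / (q + 1))"
  have tpos: "t > 0" using apos qnn by (simp add: t_def)
  have tle: "t \<le> 1" by (simp add: t_def)
  have tq: "t * q < 2 * a"
  proof (cases "a / (q + 1) \<le> 1")
    case True
    hence "t = a / (q+1)" by (simp add: t_def)
    hence "t * (q + 1) = a" using qnn by (simp add: field_simps)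
    thus ?thesis using tpos apos by (simp add: algebra_simps)
  next
    case False
    hence "t = 1" by (simp add: t_def)
    moreover have "q + 1 < a" using False qnn by (simp add: field_simps)
    ultimately show ?thesis using qnn by simp
  qed
  define lt where "lt = (\<lambda>i. (1 - t) * lam i + (if i = i0 then t else 0))"
  have lam_s: "\<forall>i\<in>I. 0 \<le> lam i" "\<forall>i. i \<notin> I \<longrightarrow> lam i = 0" "sum lam I = 1"
    using lam by (auto simp: stdsimp_def)
  have "lt \<in> stdsimp I"
  proof -
    have "sum lt I = (1 - t) * sum lam I + t"
      using fI i0 by (simp add: lt_def sum.distrib sum_distrib_left)
    thus ?thesis using lam_s tle tpos i0 by (auto simp: stdsimp_def lt_def)
  qed
  hence F: "m \<le> (\<Sum>k\<in>K. (\<Sum>i\<in>I. lt i * h i k)\<^sup>2)"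
    using min by (simp add: m_def x_def)
  have comb: "(\<Sum>i\<in>I. lt i * h i k) = x k + t * d k" for k
  proof -
    have "(\<Sum>i\<in>I. lt i * h i k) = (1 - t) * x k + t * h i0 k"
    proof -
      have "(\<Sum>i\<in>I. lt i * h i k) = (\<Sum>i\<in>I. (1 - t) * (lam i * h i k)) + (\<Sum>i\<in>I. (if i = i0 then t * h i k else 0))"
        unfolding lt_def sum.distrib[symmetric] by (intro sum.cong) (auto simp: algebra_simps)
      thus ?thesis using fI i0 by (simp add: x_def sum_distrib_left)
    qed
    thus ?thesis by (simp add: d_def algebra_simps)
  qed
  have "(\<Sum>k\<in>K. (x k + t * d k)\<^sup>2) = m + 2 * t * (\<Sum>k\<in>K. x k * d k) + t\<^sup>2 * q"
    by (simp add: power2_sum m_def q_def sum.distrib sum_distrib_left power_mult_distrib algebra_simps)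
  moreover have "(\<Sum>k\<in>K. x k * d k) = - a"
    by (simp add: d_def a_def m_def right_diff_distrib sum_subtractf power2_eq_square)
  ultimately have "(\<Sum>k\<in>K. (\<Sum>i\<in>I. lt i * h i k)\<^sup>2) = m - t * (2 * a - t * q)"
    by (simp add: comb power2_eq_square algebra_simps)
  moreover have "t * (2 * a - t * q) > 0" using tpos tq by simp
  ultimately show False using F by linarith
qed

lemma colorful:
  fixes g :: "'i \<Rightarrow> 'j \<Rightarrow> 'k \<Rightarrow> real"
  assumes fI: "finite I" and fJ: "finite J" and fK: "finite K" and card: "card K < card I"
    and hyp: "\<And>i x. i \<in> I \<Longrightarrow> \<exists>j\<in>J. (\<Sum>k\<in>K. x k * g i j k) \<le> 0"
  shows "\<exists>ch. (\<forall>i\<in>I. ch i \<in> J) \<and> (\<exists>lam\<in>stdsimp I. \<forall>k\<in>K. (\<Sum>i\<in>I. lam i * g i (ch i) k) = 0)"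
proof -
  define F where "F = (\<lambda>ch lam. \<Sum>k\<in>K. (\<Sum>i\<in>I. lam i * g i (ch i) k)\<^sup>2)"
  have Ine: "I \<noteq> {}" using card by auto
  then obtain i1 where i1: "i1 \<in> I" by auto
  have sne: "stdsimp I \<noteq> {}"
  proof -
    have "(\<lambda>i. if i = i1 then 1 else 0::real) \<in> stdsimp I"
      using i1 fI by (auto simp: stdsimp_def)
    thus ?thesis by auto
  qed
  have exmin: "\<exists>lam\<in>stdsimp I. \<forall>l'\<in>stdsimp I. F ch lam \<le> F ch l'" for ch
  proof -
    have "continuous_on (stdsimp I) (F ch)"
      unfolding F_def
      by (auto intro!: continuous_intros continuous_on_subset[OF continuous_on_product_coordinates])
    thus ?thesis using continuous_attains_inf[OF stdsimp_compact[OF fI] sne] by blast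
  qed
  then obtain lm where lm: "\<And>ch. lm ch \<in> stdsimp I" "\<And>ch l'. l' \<in> stdsimp I \<Longrightarrow> F ch (lm ch) \<le> F ch l'"
    by metis
  define CH where "CH = PiE I (\<lambda>_. J)"
  have fCH: "finite CH" using fI fJ by (simp add: CH_def finite_PiE)
  have Jne: "J \<noteq> {}" using hyp[OF i1, of "\<lambda>_. 0"] by auto
  have CHne: "CH \<noteq> {}" using Jne by (simp add: CH_def PiE_eq_empty_iff)
  define m where "m = Min ((\<lambda>ch. F ch (lm ch)) ` CH)"
  obtain ch0 where ch0: "ch0 \<in> CH" "F ch0 (lm ch0) = m"
  proof -
    have "m \<in> (\<lambda>ch. F ch (lm ch)) ` CH" unfolding m_def using fCH CHne by (intro Min_in) auto
    thus ?thesis using that by auto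
  qed
  have glob: "m \<le> F ch l" if "ch \<in> CH" "l \<in> stdsimp I" for ch l
  proof -
    have "m \<le> F ch (lm ch)" using that fCH by (simp add: m_def)
    also have "\<dots> \<le> F ch l" using lm(2) that by simp
    finally show ?thesis .
  qed
  have key: "(\<Sum>k\<in>K. (\<Sum>i\<in>I. l i * g i (ch i) k) * g i0 (ch i0) k) \<ge> m"
    if "ch \<in> CH" "l \<in> stdsimp I" "F ch l = m" "i0 \<in> I" for ch l i0
  proof -
    have "\<forall>l'\<in>stdsimp I. F ch l \<le> F ch l'" using glob that by simp
    from cc_key[OF fI fK that(4) that(2), of "\<lambda>i. g i (ch i)"] this that(3)
    show ?thesis by (simp add: F_def)
  qed
  have mnn: "m \<ge> 0" using ch0 by (auto simp: F_def intro!: sum_nonneg simp flip: ch0(2))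
  define x where "x = (\<lambda>k. \<Sum>i\<in>I. lm ch0 i * g i (ch0 i) k)"
  have chJ: "\<forall>i\<in>I. ch i \<in> J" if "ch \<in> CH" for ch using that by (auto simp: CH_def)
  show ?thesis
  proof (cases "m = 0")
    case True
    hence "\<forall>k\<in>K. (x k)\<^sup>2 = 0"
      using ch0(2) fK by (simp add: F_def x_def sum_nonneg_eq_0_iff)
    hence "\<forall>k\<in>K. x k = 0" by simp
    thus ?thesis using chJ[OF ch0(1)] lm(1)[of ch0] by (auto simp: x_def)
  next
    case False
    hence mpos: "m > 0" using mnn by simp
    define lam0 where "lam0 = lm ch0"
    have lam0s: "lam0 \<in> stdsimp I" by (simp add: lam0_def lm)
    have lam0p: "\<forall>i\<in>I. 0 \<le> lam0 i" "\<forall>i. i \<notin> I \<longrightarrow> lam0 i = 0" "sum lam0 I = 1"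
      using lam0s by (auto simp: stdsimp_def)
    have mx: "m = (\<Sum>k\<in>K. (x k)\<^sup>2)" using ch0(2) by (simp add: F_def x_def lam0_def)
    obtain lam1 i0 where lam1: "lam1 \<in> stdsimp I" "i0 \<in> I" "lam1 i0 = 0"
      "\<forall>k\<in>K. (\<Sum>i\<in>I. lam1 i * g i (ch0 i) k) = x k"
    proof (cases "\<exists>i0\<in>I. lam0 i0 = 0")
      case True
      then obtain i0 where "i0 \<in> I" "lam0 i0 = 0" by auto
      thus ?thesis using that[of lam0 i0] lam0s by (auto simp: x_def lam0_def)
    next
      case False
      hence lpos: "\<forall>i\<in>I. lam0 i > 0" using lam0p by force
      define v where "v = (\<lambda>i. g i (ch0 i))"
      define ip where "ip = (\<lambda>i. \<Sum>k\<in>K. x k * v i k)"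
      have ipge: "\<forall>i\<in>I. ip i \<ge> m"
        using key[OF ch0(1) lam0s] ch0(2) by (simp add: ip_def x_def v_def lam0_def)
      have "(\<Sum>i\<in>I. lam0 i * ip i) = (\<Sum>k\<in>K. x k * x k)"
        unfolding ip_def x_def v_def lam0_def
        by (simp add: sum_distrib_left sum_distrib_right algebra_simps sum.swap[of _ I K])
      hence "(\<Sum>i\<in>I. lam0 i * ip i) = m" by (simp add: mx power2_eq_square)
      hence "(\<Sum>i\<in>I. lam0 i * (ip i - m)) = 0"
        using lam0p(3) by (simp add: right_diff_distrib sum_subtractf sum_distrib_right[symmetric])
      moreover have "\<forall>i\<in>I. lam0 i * (ip i - m) \<ge> 0" using ipge lam0p by simp
      ultimately have "\<forall>i\<in>I. lam0 i * (ip i - m) = 0" using fI by (simp add: sum_nonneg_eq_0_iff)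
      hence ipeq: "\<forall>i\<in>I. ip i = m" using lpos by force
      obtain mu where mu: "\<exists>i\<in>I. mu i \<noteq> 0" "\<forall>k\<in>K. (\<Sum>i\<in>I. mu i * v i k) = 0"
        using lin_dep[OF fK fI card, of v] by auto
      have "(\<Sum>i\<in>I. mu i * ip i) = (\<Sum>k\<in>K. x k * (\<Sum>i\<in>I. mu i * v i k))"
        unfolding ip_def
        by (simp add: sum_distrib_left sum_distrib_right algebra_simps sum.swap[of _ I K])
      also have "\<dots> = 0" using mu(2) by simp
      finally have "m * sum mu I = 0" using ipeq by (simp add: sum_distrib_left mult.commute)
      hence musum: "sum mu I = 0" using mpos by simp
      have "\<exists>i\<in>I. mu i > 0"
      proof (rule ccontr)
        assume "\<not> ?thesis"
        hence "\<forall>i\<in>I. mu i \<le> 0" by auto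
        moreover have "(\<Sum>i\<in>I. - mu i) = 0" using musum by (simp add: sum_negf)
        ultimately have "\<forall>i\<in>I. - mu i = 0" using fI sum_nonneg_eq_0_iff[of I "\<lambda>i. - mu i"] by auto
        hence "\<forall>i\<in>I. mu i = 0" by simp
        thus False using mu(1) by auto
      qed
      define P where "P = {i\<in>I. mu i > 0}"
      have fP: "finite P" "P \<noteq> {}" using fI \<open>\<exists>i\<in>I. mu i > 0\<close> by (auto simp: P_def)
      define t where "t = Min ((\<lambda>i. lam0 i / mu i) ` P)"
      obtain i0 where i0: "i0 \<in> P" "t = lam0 i0 / mu i0"
      proof -
        have "t \<in> (\<lambda>i. lam0 i / mu i) ` P" unfolding t_def using fP by (intro Min_in) auto
        thus ?thesis using that by auto
      qed
      have tle: "t \<le> lam0 i / mu i" if "i \<in> P" for i using fP that by (simp add: t_def)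
      have tpos: "t > 0" using i0 lpos by (auto simp: P_def)
      define lam1 where "lam1 = (\<lambda>i. if i \<in> I then lam0 i - t * mu i else 0)"
      have "lam1 \<in> stdsimp I"
      proof -
        have nn: "0 \<le> lam1 i" if "i \<in> I" for i
        proof (cases "mu i > 0")
          case True
          hence "t \<le> lam0 i / mu i" using tle that by (simp add: P_def)
          hence "t * mu i \<le> lam0 i" using True by (simp add: field_simps)
          thus ?thesis using that by (simp add: lam1_def)
        next
          case False
          hence "t * mu i \<le> 0" using tpos by (simp add: mult_nonneg_nonpos)
          moreover have "0 \<le> lam0 i" using that lam0p(1) by blast
          ultimately show ?thesis using that by (simp add: lam1_def)
        qed
        have "sum lam1 I = sum lam0 I - t * sum mu I"
          by (simp add: lam1_def sum_subtractf sum_distrib_left)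
        thus ?thesis using nn lam0p musum by (auto simp: stdsimp_def lam1_def)
      qed
      moreover have "i0 \<in> I" using i0 by (simp add: P_def)
      moreover have "lam1 i0 = 0" using i0 by (auto simp: lam1_def P_def)
      moreover have "\<forall>k\<in>K. (\<Sum>i\<in>I. lam1 i * g i (ch0 i) k) = x k"
      proof
        fix k assume kK: "k \<in> K"
        have "(\<Sum>i\<in>I. lam1 i * g i (ch0 i) k) = (\<Sum>i\<in>I. lam0 i * v i k) - t * (\<Sum>i\<in>I. mu i * v i k)"
          by (simp add: lam1_def v_def left_diff_distrib sum_subtractf sum_distrib_left algebra_simps)
        thus "(\<Sum>i\<in>I. lam1 i * g i (ch0 i) k) = x k" using mu(2) kK by (simp add: x_def v_def lam0_def)
      qed
      ultimately show ?thesis using that by blast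
    qed
    obtain j where j: "j \<in> J" "(\<Sum>k\<in>K. x k * g i0 j k) \<le> 0" using hyp[OF lam1(2)] by blast
    define ch1 where "ch1 = ch0(i0 := j)"
    have ch1C: "ch1 \<in> CH" using ch0(1) j(1) lam1(2) by (auto simp: CH_def ch1_def PiE_iff extensional_def)
    have c1: "\<forall>k\<in>K. (\<Sum>i\<in>I. lam1 i * g i (ch1 i) k) = x k"
    proof
      fix k assume "k \<in> K"
      have "(\<Sum>i\<in>I. lam1 i * g i (ch1 i) k) = (\<Sum>i\<in>I. lam1 i * g i (ch0 i) k)"
        by (intro sum.cong) (auto simp: ch1_def lam1(3))
      thus "(\<Sum>i\<in>I. lam1 i * g i (ch1 i) k) = x k" using lam1(4) \<open>k \<in> K\<close> by simp
    qed
    have F1: "F ch1 lam1 = m" using c1 by (simp add: F_def mx)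
    have "(\<Sum>k\<in>K. (\<Sum>i\<in>I. lam1 i * g i (ch1 i) k) * g i0 (ch1 i0) k) \<ge> m"
      using key[OF ch1C lam1(1) F1 lam1(2)] .
    moreover have "(\<Sum>k\<in>K. (\<Sum>i\<in>I. lam1 i * g i (ch1 i) k) * g i0 (ch1 i0) k) = (\<Sum>k\<in>K. x k * g i0 j k)"
      using c1 by (simp add: ch1_def)
    ultimately show ?thesis using j(2) mpos by linarith
  qed
qed

definition lift :: "real ^ 'd \<Rightarrow> 'd option \<Rightarrow> real" where
  "lift a c = (case c of None \<Rightarrow> 1 | Some i \<Rightarrow> a $ i)"

definition wv :: "nat \<Rightarrow> nat \<Rightarrow> nat \<Rightarrow> real" where
  "wv r j l = (if l = j then 1 else 0) - (if j = r - 1 then 1 else 0)"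

lemma wv_sum: "l < r - 1 \<Longrightarrow> (\<Sum>j<r. wv r j l) = 0"
  by (simp add: wv_def sum_subtractf)

lemma tverberg:
  fixes A :: "(real ^ 'd) set"
  assumes fA: "finite A" and r1: "r \<ge> 1" and cA: "card A \<ge> Tv CARD('d) r"
  shows "\<exists>P. tverberg_partition A r P"
proof -
  define K where "K = (UNIV :: 'd option set) \<times> {..<r-1}"
  define g where "g = (\<lambda>(a::real^'d) (j::nat) (k::'d option \<times> nat). lift a (fst k) * wv r j (snd k))"
  have fK: "finite K" by (simp add: K_def)
  have cK: "card K < card A"
  proof -
    have "card K = CARD('d option) * (r - 1)" by (simp add: K_def card_cartesian_product)
    also have "\<dots> = (CARD('d) + 1) * (r - 1)" by (simp add: card_option)
    finally show ?thesis using cA by (simp add: Tv_def)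
  qed
  have hyp: "\<exists>j\<in>{..<r}. (\<Sum>k\<in>K. x k * g a j k) \<le> 0" if "a \<in> A" for a x
  proof (rule ccontr)
    assume "\<not> ?thesis"
    hence pos: "\<forall>j\<in>{..<r}. (\<Sum>k\<in>K. x k * g a j k) > 0" by (meson not_le)
    have "(\<Sum>j<r. \<Sum>k\<in>K. x k * g a j k) = (\<Sum>k\<in>K. x k * lift a (fst k) * (\<Sum>j<r. wv r j (snd k)))"
      by (simp add: g_def sum.swap[of _ "{..<r}" K] sum_distrib_left case_prod_beta algebra_simps)
    also have "\<dots> = 0" by (intro sum.neutral) (auto simp: K_def wv_sum)
    finally have "(\<Sum>j<r. \<Sum>k\<in>K. x k * g a j k) = 0" .
    moreover have "(\<Sum>j<r. \<Sum>k\<in>K. x k * g a j k) > 0"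
      by (rule sum_pos) (use pos r1 in \<open>auto simp: lessThan_empty_iff\<close>)
    ultimately show False by simp
  qed
  obtain ch lam where ch: "\<forall>a\<in>A. ch a \<in> {..<r}" and lam: "lam \<in> stdsimp A"
    and eq0: "\<forall>k\<in>K. (\<Sum>a\<in>A. lam a * g a (ch a) k) = 0"
    using colorful[OF fA _ fK cK, of "{..<r}" g] hyp by blast
  have lamp: "\<forall>a\<in>A. 0 \<le> lam a" "sum lam A = 1" using lam by (auto simp: stdsimp_def)
  define V where "V = (\<lambda>j c. \<Sum>a\<in>A. if ch a = j then lam a * lift a c else 0)"
  have Veq: "V j c = V (r - 1) c" if "j < r" for j c
  proof (cases "j = r - 1")
    case False
    hence jl: "j < r - 1" using that by simp
    have "(\<Sum>a\<in>A. lam a * g a (ch a) (c, j)) = V j c - V (r - 1) c"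
      unfolding V_def g_def wv_def
      by (simp add: sum_subtractf[symmetric] algebra_simps, intro sum.cong) auto
    moreover have "(c, j) \<in> K" using jl by (simp add: K_def)
    ultimately show ?thesis using eq0 by fastforce
  qed simp
  define s where "s = V (r - 1) None"
  have "(\<Sum>j<r. V j None) = sum lam A"
  proof -
    have "(\<Sum>j<r. V j None) = (\<Sum>a\<in>A. \<Sum>j<r. if ch a = j then lam a else 0)"
      unfolding V_def lift_def option.case mult_1_right by (rule sum.swap)
    also have "\<dots> = sum lam A" using ch by (intro sum.cong) auto
    finally show ?thesis .
  qed
  moreover have "(\<Sum>j<r. V j None) = (\<Sum>j<r. s)"
    unfolding s_def by (rule sum.cong, simp, rule Veq, simp)
  ultimately have "r * s = 1" using lamp by simp
  hence rs: "real r * s = 1" by simp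
  have spos: "s > 0"
  proof -
    have "real r > 0" using r1 by simp
    thus ?thesis using rs zero_less_mult_iff[of "real r" s] by simp
  qed
  define B where "B = (\<lambda>j. {a\<in>A. ch a = j})"
  have VB: "V j c = (\<Sum>a\<in>B j. lam a * lift a c)" for j c
    by (simp add: V_def B_def sum.inter_filter fA)
  have Bne: "B j \<noteq> {}" if "j < r" for j
  proof
    assume "B j = {}"
    hence "V j None = 0" by (simp add: VB)
    thus False using Veq[OF that, of None] spos by (simp add: s_def)
  qed
  define p where "p = (\<Sum>a\<in>B (r - 1). (r * lam a) *\<^sub>R a)"
  have hull: "p \<in> convex hull (B j)" if "j < r" for j
  proof -
    have fB: "finite (B j)" by (simp add: B_def fA)
    have pj: "p = (\<Sum>a\<in>B j. (r * lam a) *\<^sub>R a)"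
    proof (subst vec_eq_iff, rule allI)
      fix c
      have "\<And>j. (\<Sum>a\<in>B j. (r * lam a) *\<^sub>R a) $ c = r * V j (Some c)"
        by (simp add: VB lift_def sum_distrib_left algebra_simps)
      thus "p $ c = (\<Sum>a\<in>B j. (r * lam a) *\<^sub>R a) $ c"
        using Veq[OF that, of "Some c"] by (simp add: p_def)
    qed
    have "(\<Sum>a\<in>B j. r * lam a) = 1"
      using Veq[OF that, of None] rs by (simp add: VB lift_def sum_distrib_left[symmetric] s_def)
    moreover have "\<forall>a\<in>B j. 0 \<le> r * lam a" using lamp by (simp add: B_def)
    ultimately show ?thesis unfolding convex_hull_finite[OF fB] mem_Collect_eq
      by (intro exI[of _ "\<lambda>a. r * lam a"]) (simp add: pj)
  qed
  define P where "P = B ` {..<r}"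
  have disj: "B i \<inter> B j = {}" if "i \<noteq> j" for i j using that by (auto simp: B_def)
  have inj: "inj_on B {..<r}"
  proof (rule inj_onI)
    fix i j assume "i \<in> {..<r}" "j \<in> {..<r}" "B i = B j"
    thus "i = j" using disj[of i j] Bne by auto
  qed
  have "partition_on A P"
  proof (rule partition_onI)
    show "\<Union> P = A" using ch by (auto simp: P_def B_def)
    show "disjnt p1 q1" if h: "p1 \<in> P" "q1 \<in> P" "p1 \<noteq> q1" for p1 q1
    proof -
      obtain i j where "p1 = B i" "q1 = B j" using h(1,2) unfolding P_def by blast
      hence "i \<noteq> j" using h by auto
      thus ?thesis using disj[of i j] \<open>p1 = B i\<close> \<open>q1 = B j\<close> by (simp add: disjnt_def)
    qed
    show "{} \<notin> P" using Bne by (auto simp: P_def)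
  qed
  moreover have "card P = r" using inj by (simp add: P_def card_image)
  moreover have "p \<in> (\<Inter>b\<in>P. convex hull b)" using hull by (auto simp: P_def)
  ultimately show ?thesis unfolding tverberg_partition_def partition_into_def by blast
qed


definition rel :: "'a set set \<Rightarrow> 'a \<Rightarrow> 'a \<Rightarrow> bool" where
  "rel P a b \<longleftrightarrow> (\<exists>B\<in>P. a \<in> B \<and> b \<in> B)"

lemma block_unique:
  assumes "partition_on S P" "B \<in> P" "B' \<in> P" "a \<in> B" "a \<in> B'"
  shows "B = B'"
proof (rule ccontr)
  assume "B \<noteq> B'"
  hence "B \<inter> B' = {}" using partition_onD2[OF assms(1)] assms(2,3) by (simp add: disjoint_def)
  thus False using assms(4,5) by auto
qed

lemma rel_refl: "partition_on S P \<Longrightarrow> a \<in> S \<Longrightarrow> rel P a a"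
  unfolding rel_def by (auto dest: partition_onD1)

lemma rel_sym: "rel P a b \<Longrightarrow> rel P b a"
  unfolding rel_def by auto

lemma rel_trans:
  assumes "partition_on S P" "rel P a b" "rel P b c" shows "rel P a c"
proof -
  obtain B where B: "B \<in> P" "a \<in> B" "b \<in> B" using assms(2) by (auto simp: rel_def)
  obtain B' where B': "B' \<in> P" "b \<in> B'" "c \<in> B'" using assms(3) by (auto simp: rel_def)
  have "B = B'" using block_unique[OF assms(1) B(1) B'(1) B(3) B'(2)] .
  thus ?thesis using B B' by (auto simp: rel_def)
qed

lemma rel_in: "partition_on S P \<Longrightarrow> rel P a b \<Longrightarrow> a \<in> S \<and> b \<in> S"
  unfolding rel_def by (auto dest: partition_onD1)

lemma block_in:
  assumes "partition_on S P" "a \<in> S"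
  shows "{u\<in>S. rel P a u} \<in> P"
proof -
  obtain B where B: "B \<in> P" "a \<in> B" using assms partition_onD1[OF assms(1)] by blast
  have "B = {u\<in>S. rel P a u}"
  proof
    show "B \<subseteq> {u\<in>S. rel P a u}" using B partition_onD1[OF assms(1)] by (auto simp: rel_def)
    show "{u\<in>S. rel P a u} \<subseteq> B" using B block_unique[OF assms(1)] by (auto simp: rel_def)
  qed
  thus ?thesis using B by simp
qed

lemma restrict_iff:
  assumes P: "partition_on S P" and Q: "partition_on S Q" and T: "T \<subseteq> S"
  shows "restrict_partition P T = restrict_partition Q T \<longleftrightarrow> (\<forall>a\<in>T. \<forall>b\<in>T. rel P a b = rel Q a b)"
proof
  assume eq: "restrict_partition P T = restrict_partition Q T"
  have dir: "rel P2 a b" if h: "restrict_partition P1 T = restrict_partition P2 T" "rel P1 a b" "a \<in> T" "b \<in> T"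
    for P1 P2 a b
  proof -
    obtain B where "B \<in> P1" "a \<in> B" "b \<in> B" using h(2) by (auto simp: rel_def)
    hence "B \<inter> T \<in> restrict_partition P1 T" using h(3) by (auto simp: restrict_partition_def)
    hence "B \<inter> T \<in> restrict_partition P2 T" using h(1) by simp
    then obtain B' where "B' \<in> P2" "B \<inter> T = B' \<inter> T" by (auto simp: restrict_partition_def)
    thus ?thesis using \<open>a \<in> B\<close> \<open>b \<in> B\<close> h(3,4) by (auto simp: rel_def)
  qed
  show "\<forall>a\<in>T. \<forall>b\<in>T. rel P a b = rel Q a b"
    using dir[OF eq] dir[OF eq[symmetric]] by blast
next
  assume h: "\<forall>a\<in>T. \<forall>b\<in>T. rel P a b = rel Q a b"
  have dir: "restrict_partition P1 T \<subseteq> restrict_partition P2 T"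
    if P1: "partition_on S P1" and P2: "partition_on S P2" and h1: "\<forall>a\<in>T. \<forall>b\<in>T. rel P1 a b = rel P2 a b" for P1 P2
  proof
    fix X assume "X \<in> restrict_partition P1 T"
    then obtain B where B: "B \<in> P1" "X = B \<inter> T" "X \<noteq> {}" by (auto simp: restrict_partition_def)
    then obtain a where a: "a \<in> B" "a \<in> T" by auto
    obtain B' where B': "B' \<in> P2" "a \<in> B'" using a T partition_onD1[OF P2] by blast
    have "B \<inter> T = B' \<inter> T"
    proof (intro set_eqI iffI)
      fix b assume "b \<in> B \<inter> T"
      hence "rel P1 a b" using B a by (auto simp: rel_def)
      hence "rel P2 a b" using h1 a \<open>b \<in> B \<inter> T\<close> by auto
      then obtain B'' where "B'' \<in> P2" "a \<in> B''" "b \<in> B''" by (auto simp: rel_def)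
      hence "B'' = B'" using block_unique[OF P2] B' by blast
      thus "b \<in> B' \<inter> T" using \<open>b \<in> B''\<close> \<open>b \<in> B \<inter> T\<close> by auto
    next
      fix b assume "b \<in> B' \<inter> T"
      hence "rel P2 a b" using B' a by (auto simp: rel_def)
      hence "rel P1 a b" using h1 a \<open>b \<in> B' \<inter> T\<close> by auto
      then obtain B'' where "B'' \<in> P1" "a \<in> B''" "b \<in> B''" by (auto simp: rel_def)
      hence "B'' = B" using block_unique[OF P1] B a by blast
      thus "b \<in> B \<inter> T" using \<open>b \<in> B''\<close> \<open>b \<in> B' \<inter> T\<close> by auto
    qed
    thus "X \<in> restrict_partition P2 T" using B B' by (auto simp: restrict_partition_def)
  qed
  show "restrict_partition P T = restrict_partition Q T"
    using dir[OF P Q h] dir[OF Q P] h by auto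
qed

lemma restrict_self:
  assumes "partition_on S P"
  shows "restrict_partition P S = P"
proof -
  have "\<And>B. B \<in> P \<Longrightarrow> B \<inter> S = B" using partition_onD1[OF assms] by auto
  hence "(\<lambda>B. B \<inter> S) ` P = P" by simp
  thus ?thesis using partition_onD3[OF assms] by (simp add: restrict_partition_def)
qed

lemma rel_eq_imp_eq:
  assumes "partition_on S P" "partition_on S Q" "\<forall>a\<in>S. \<forall>b\<in>S. rel P a b = rel Q a b"
  shows "P = Q"
proof -
  have "restrict_partition P S = restrict_partition Q S"
    using restrict_iff[OF assms(1,2) order_refl] assms(3) by blast
  thus ?thesis using restrict_self[OF assms(1)] restrict_self[OF assms(2)] by simp
qed

lemma finite_partition: "finite S \<Longrightarrow> partition_on S P \<Longrightarrow> finite P"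
  by (metis finite_UnionD partition_onD1)

lemma restrict_empty: "restrict_partition P {} = {}"
  by (auto simp: restrict_partition_def)

lemma dist_one:
  assumes fS: "finite S" and P: "partition_on S P" and Q: "partition_on S Q"
  shows "partition_distance S P Q = 1 \<longleftrightarrow>
    P \<noteq> Q \<and> (\<exists>x\<in>S. restrict_partition P (S - {x}) = restrict_partition Q (S - {x}))"
proof -
  define M where "M = {card X | X. X \<subseteq> S \<and> restrict_partition P (S - X) = restrict_partition Q (S - X)}"
  have dM: "partition_distance S P Q = Min M" by (simp add: partition_distance_def M_def)
  have fM: "finite M"
  proof -
    have "M \<subseteq> card ` Pow S" by (auto simp: M_def)
    thus ?thesis using fS by (meson finite_surj finite_Pow_iff)
  qed
  have "card S \<in> M" unfolding M_def by (rule_tac CollectI, rule_tac exI[of _ S]) (simp add: restrict_empty)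
  hence Mne: "M \<noteq> {}" by auto
  have zero: "0 \<in> M \<longleftrightarrow> P = Q"
  proof
    assume "0 \<in> M"
    then obtain X where X: "card X = 0" "X \<subseteq> S" "restrict_partition P (S - X) = restrict_partition Q (S - X)"
      by (auto simp: M_def)
    hence "X = {}" using fS by (meson card_0_eq finite_subset)
    thus "P = Q" using X restrict_self[OF P] restrict_self[OF Q] by simp
  next
    assume "P = Q"
    thus "0 \<in> M" unfolding M_def by (rule_tac CollectI, rule_tac exI[of _ "{}"]) simp
  qed
  have one: "1 \<in> M \<longleftrightarrow> (\<exists>x\<in>S. restrict_partition P (S - {x}) = restrict_partition Q (S - {x}))"
  proof
    assume "1 \<in> M"
    then obtain X where X: "card X = 1" "X \<subseteq> S" "restrict_partition P (S - X) = restrict_partition Q (S - X)"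
      by (auto simp: M_def)
    then obtain x where "X = {x}" by (meson card_1_singletonE)
    thus "\<exists>x\<in>S. restrict_partition P (S - {x}) = restrict_partition Q (S - {x})" using X by auto
  next
    assume "\<exists>x\<in>S. restrict_partition P (S - {x}) = restrict_partition Q (S - {x})"
    then obtain x where "x \<in> S" "restrict_partition P (S - {x}) = restrict_partition Q (S - {x})" by blast
    thus "1 \<in> M" unfolding M_def by (rule_tac CollectI, rule_tac exI[of _ "{x}"]) simp
  qed
  show ?thesis
  proof
    assume "partition_distance S P Q = 1"
    hence "Min M = 1" by (simp add: dM)
    hence "1 \<in> M" "0 \<notin> M" using Min_in[OF fM Mne] Min_le[OF fM] by (metis, metis not_one_le_zero)
    thus "P \<noteq> Q \<and> (\<exists>x\<in>S. restrict_partition P (S - {x}) = restrict_partition Q (S - {x}))"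
      using zero one by blast
  next
    assume h: "P \<noteq> Q \<and> (\<exists>x\<in>S. restrict_partition P (S - {x}) = restrict_partition Q (S - {x}))"
    hence "1 \<in> M" "0 \<notin> M" using zero one by blast+
    hence "Min M \<le> 1" "Min M \<in> M" using Min_le[OF fM] Min_in[OF fM Mne] by auto
    hence "Min M = 1" using \<open>0 \<notin> M\<close> by (metis le_neq_implies_less less_one)
    thus "partition_distance S P Q = 1" by (simp add: dM)
  qed
qed

lemma nonsingleton:
  assumes fS: "finite S" and P: "partition_on S P" and Q: "partition_on S Q" and cPQ: "card P = card Q"
    and ne: "P \<noteq> Q" and x: "x \<in> S"
    and eq: "restrict_partition P (S - {x}) = restrict_partition Q (S - {x})"
  shows "{x} \<notin> P"
proof
  assume xP: "{x} \<in> P"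
  define T where "T = S - {x}"
  have rsing: "restrict_partition P1 T = P1 - {{x}}" if P1: "partition_on S P1" and x1: "{x} \<in> P1" for P1
  proof -
    have "B \<inter> T = B" if "B \<in> P1" "B \<noteq> {x}" for B
    proof -
      have "x \<notin> B" using block_unique[OF P1 that(1) x1] that(2) by auto
      thus ?thesis using that(1) partition_onD1[OF P1] by (auto simp: T_def)
    qed
    hence im: "(\<lambda>B. B \<inter> T) ` P1 = insert {} (P1 - {{x}})"
    proof -
      assume h: "\<And>B. B \<in> P1 \<Longrightarrow> B \<noteq> {x} \<Longrightarrow> B \<inter> T = B"
      have "(\<lambda>B. B \<inter> T) ` P1 = (\<lambda>B. B \<inter> T) ` (insert {x} (P1 - {{x}}))" using x1 by (simp add: insert_absorb)
      also have "\<dots> = insert {} ((\<lambda>B. B \<inter> T) ` (P1 - {{x}}))"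
      proof -
        have "{x} \<inter> T = {}" by (simp add: T_def)
        thus ?thesis unfolding image_insert by simp
      qed
      also have "(\<lambda>B. B \<inter> T) ` (P1 - {{x}}) = (\<lambda>B. B) ` (P1 - {{x}})"
        by (rule image_cong, rule refl, rule h) auto
      finally show ?thesis by simp
    qed
    thus ?thesis using partition_onD3[OF P1] by (auto simp: restrict_partition_def)
  qed
  have fP: "finite P" "finite Q" using fS P Q finite_partition by auto
  show False
  proof (cases "{x} \<in> Q")
    case True
    hence "P - {{x}} = Q - {{x}}" using eq rsing[OF P xP] rsing[OF Q True] by (simp add: T_def)
    thus False using xP True ne by blast
  next
    case False
    have nonempty: "B \<inter> T \<noteq> {}" if "B \<in> Q" for B
    proof
      assume "B \<inter> T = {}"
      hence "B \<subseteq> {x}" using that partition_onD1[OF Q] by (auto simp: T_def)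
      moreover have "B \<noteq> {}" using partition_onD3[OF Q] that by auto
      ultimately have "B = {x}" by auto
      thus False using False that by simp
    qed
    have inj: "inj_on (\<lambda>B. B \<inter> T) Q"
    proof (rule inj_onI)
      fix B1 B2 assume h: "B1 \<in> Q" "B2 \<in> Q" "B1 \<inter> T = B2 \<inter> T"
      show "B1 = B2"
      proof (rule ccontr)
        assume "B1 \<noteq> B2"
        hence "B1 \<inter> B2 = {}" using partition_onD2[OF Q] h by (simp add: disjoint_def)
        hence "B1 \<inter> T = {}" using h(3) by blast
        thus False using nonempty h(1) by simp
      qed
    qed
    have "restrict_partition Q T = (\<lambda>B. B \<inter> T) ` Q" using nonempty by (auto simp: restrict_partition_def)
    hence c1: "card (restrict_partition Q T) = card Q" using inj by (simp add: card_image)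
    have c2: "card (restrict_partition P T) = card P - 1" using rsing[OF P xP] xP fP by simp
    have "card P \<ge> 1" using xP fP by (metis One_nat_def Suc_leI card_gt_0_iff empty_iff)
    thus False using c1 c2 eq cPQ by (simp add: T_def)
  qed
qed

definition agree :: "'a set \<Rightarrow> 'a \<Rightarrow> 'a set set \<Rightarrow> 'a set set \<Rightarrow> bool" where
  "agree S x P Q \<longleftrightarrow> (\<forall>a\<in>S. \<forall>b\<in>S. a \<noteq> x \<longrightarrow> b \<noteq> x \<longrightarrow> rel P a b = rel Q a b)"

lemma agreeD: "agree S x P Q \<Longrightarrow> a \<in> S \<Longrightarrow> b \<in> S \<Longrightarrow> a \<noteq> x \<Longrightarrow> b \<noteq> x \<Longrightarrow> rel P a b = rel Q a b"
  by (simp add: agree_def)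

lemma agree_sym: "agree S x P Q \<Longrightarrow> agree S x Q P"
  by (auto simp: agree_def)

lemma agree_trans: "agree S x P Q \<Longrightarrow> agree S x Q R \<Longrightarrow> agree S x P R"
  by (auto simp: agree_def)

lemma agree_iff:
  assumes "partition_on S P" "partition_on S Q"
  shows "restrict_partition P (S - {x}) = restrict_partition Q (S - {x}) \<longleftrightarrow> agree S x P Q"
  using restrict_iff[OF assms, of "S - {x}"] by (auto simp: agree_def)

definition mv :: "'a set \<Rightarrow> nat \<Rightarrow> 'a \<Rightarrow> 'a set set \<Rightarrow> 'a set set \<Rightarrow> bool" where
  "mv S r x P Q \<longleftrightarrow> finite S \<and> partition_on S P \<and> partition_on S Q \<and> card P = r \<and> card Q = r
     \<and> P \<noteq> Q \<and> x \<in> S \<and> agree S x P Q"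

lemma mv_sym: "mv S r x P Q \<Longrightarrow> mv S r x Q P"
  by (auto simp: mv_def agree_sym)

lemma mv_C1:
  assumes m: "mv S r x P Q" and u: "u \<in> S" "u \<noteq> x" "rel P x u"
  shows "\<not> rel Q x u"
proof
  assume q: "rel Q x u"
  have P: "partition_on S P" and Q: "partition_on S Q" and x: "x \<in> S" and ag: "agree S x P Q"
    using m by (auto simp: mv_def)
  have "rel P a b = rel Q a b" if "a \<in> S" "b \<in> S" for a b
  proof -
    have side: "rel P x b = rel Q x b" if "b \<in> S" for b
    proof (cases "b = x")
      case True thus ?thesis using rel_refl[OF P x] rel_refl[OF Q x] by simp
    next
      case False
      have "rel P x b = rel P u b" using rel_trans[OF P] rel_sym u(3) by metis
      also have "\<dots> = rel Q u b" using agreeD[OF ag u(1) that u(2) False] .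
      also have "\<dots> = rel Q x b" using rel_trans[OF Q] rel_sym q by metis
      finally show ?thesis .
    qed
    show ?thesis
    proof (cases "a = x")
      case True thus ?thesis using side[OF that(2)] by simp
    next
      case False
      show ?thesis
      proof (cases "b = x")
        case True thus ?thesis using side[OF that(1)] rel_sym by metis
      next
        case False2: False
        show ?thesis using agreeD[OF ag that False False2] .
      qed
    qed
  qed
  hence "P = Q" using rel_eq_imp_eq[OF P Q] by blast
  thus False using m by (simp add: mv_def)
qed

lemma mv_C2:
  assumes m: "mv S r x P Q"
  shows "\<exists>u\<in>S. u \<noteq> x \<and> rel P x u"
proof (rule ccontr)
  assume "\<not> ?thesis"
  hence no: "\<forall>u\<in>S. u \<noteq> x \<longrightarrow> \<not> rel P x u" by blast
  have P: "partition_on S P" and Q: "partition_on S Q" and x: "x \<in> S"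
    using m by (auto simp: mv_def)
  have "{x} \<notin> P"
    using m nonsingleton[of S P Q x] agree_iff[OF P Q, of x] by (auto simp: mv_def)
  moreover have "{u\<in>S. rel P x u} = {x}" using no rel_refl[OF P x] x by auto
  ultimately show False using block_in[OF P x] by simp
qed

lemma NS:
  assumes PQ: "mv S r x P Q" and PR: "mv S r y P R" and QR: "mv S r z Q R" and xy: "x \<noteq> y"
  shows "z \<noteq> x \<and> z \<noteq> y \<and> rel P x y \<and> \<not> rel P x z \<and> \<not> rel P y z \<and> rel Q x z \<and> rel R y z
    \<and> (\<forall>u\<in>S. rel P x u \<longrightarrow> u = x \<or> u = y) \<and> (\<forall>u\<in>S. rel P z u \<longrightarrow> u = z)"
proof -
  have P: "partition_on S P" and Q: "partition_on S Q" and R: "partition_on S R"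
    and x: "x \<in> S" and y: "y \<in> S" and z: "z \<in> S"
    and aPQ: "agree S x P Q" and aPR: "agree S y P R" and aQR: "agree S z Q R"
    using PQ PR QR by (auto simp: mv_def)
  note sym = rel_sym
  obtain a where a: "a \<in> S" "a \<noteq> x" "rel P x a" using mv_C2[OF PQ] by blast
  have na: "\<not> rel Q x a" using mv_C1[OF PQ a] .
  obtain b where b: "b \<in> S" "b \<noteq> x" "rel Q x b" using mv_C2[OF mv_sym[OF PQ]] by blast
  have nb: "\<not> rel P x b" using mv_C1[OF mv_sym[OF PQ] b] .
  obtain c where c: "c \<in> S" "c \<noteq> y" "rel P y c" using mv_C2[OF PR] by blast
  have nc: "\<not> rel R y c" using mv_C1[OF PR c] .
  obtain e where e: "e \<in> S" "e \<noteq> y" "rel R y e" using mv_C2[OF mv_sym[OF PR]] by blast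
  have ne: "\<not> rel P y e" using mv_C1[OF mv_sym[OF PR] e] .
  have F1: "z = x \<or> z = a" if "a \<noteq> y"
  proof (rule ccontr)
    assume "\<not> ?thesis"
    hence "rel Q x a = rel R x a" using agreeD[OF aQR x a(1)] by auto
    moreover have "rel P x a = rel R x a" using agreeD[OF aPR x a(1)] xy that by auto
    ultimately show False using a(3) na by simp
  qed
  have F2: "z = x \<or> z = b" if "b \<noteq> y"
  proof (rule ccontr)
    assume "\<not> ?thesis"
    hence "rel Q x b = rel R x b" using agreeD[OF aQR x b(1)] by auto
    moreover have "rel P x b = rel R x b" using agreeD[OF aPR x b(1)] xy that by auto
    ultimately show False using b(3) nb by simp
  qed
  have F3: "z = y \<or> z = c" if "c \<noteq> x"
  proof (rule ccontr)
    assume "\<not> ?thesis"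
    hence "rel Q y c = rel R y c" using agreeD[OF aQR y c(1)] by auto
    moreover have "rel P y c = rel Q y c" using agreeD[OF aPQ y c(1)] xy that by auto
    ultimately show False using c(3) nc by simp
  qed
  have F4: "z = y \<or> z = e" if "e \<noteq> x"
  proof (rule ccontr)
    assume "\<not> ?thesis"
    hence "rel Q y e = rel R y e" using agreeD[OF aQR y e(1)] by auto
    moreover have "rel P y e = rel Q y e" using agreeD[OF aPQ y e(1)] xy that by auto
    ultimately show False using e(3) ne by simp
  qed
  have ab: "a \<noteq> b" using a(3) nb by auto
  have ce: "c \<noteq> e" using c(3) ne by auto
  have zx: "z \<noteq> x"
  proof
    assume zx: "z = x"
    have "c = x" using F3 zx xy by (cases "c = x") auto
    hence "e \<noteq> x" using ce by simp
    thus False using F4 zx xy e by auto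
  qed
  have zy: "z \<noteq> y"
  proof
    assume zy: "z = y"
    have "a = y" using F1 zy xy by (cases "a = y") auto
    hence "b \<noteq> y" using ab by simp
    thus False using F2 zy xy b by auto
  qed
  have by_: "b \<noteq> y"
  proof
    assume by_: "b = y"
    hence nxy: "\<not> rel P x y" using nb by simp
    have "a \<noteq> y" using ab by_ by simp
    hence az: "a = z" using F1 zx by auto
    have "c \<noteq> x" using c(3) nxy sym by metis
    hence "c = z" using F3 zy by auto
    hence "rel P y z" using c(3) by simp
    moreover have "rel P x z" using a(3) az by simp
    ultimately have "rel P x y" using rel_trans[OF P] sym by metis
    thus False using nxy by simp
  qed
  hence ay: "a = y" using F1 F2 zx ab by auto
  have bz: "b = z" using F2 by_ zx by auto
  have Pxy: "rel P x y" using a(3) ay by simp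
  have ex: "e \<noteq> x"
  proof
    assume "e = x"
    thus False using ne Pxy sym by metis
  qed
  hence ez: "e = z" using F4 zy by auto
  have Qxz: "rel Q x z" using b(3) bz by simp
  have nPxz: "\<not> rel P x z" using nb bz by simp
  have Ryz: "rel R y z" using e(3) ez by simp
  have nPyz: "\<not> rel P y z" using ne ez by simp
  have B1: "\<forall>u\<in>S. rel P x u \<longrightarrow> u = x \<or> u = y"
  proof (intro ballI impI)
    fix u assume u: "u \<in> S" "rel P x u"
    show "u = x \<or> u = y"
    proof (rule ccontr)
      assume "\<not> ?thesis"
      hence ux: "u \<noteq> x" and uy: "u \<noteq> y" by auto
      have nq: "\<not> rel Q x u" using mv_C1[OF PQ u(1) ux u(2)] .
      have rr: "rel R x u" using agreeD[OF aPR x u(1) xy uy] u(2) by simp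
      have "u \<noteq> z" using u(2) nPxz by auto
      hence "rel Q x u = rel R x u" using agreeD[OF aQR x u(1)] zx by auto
      thus False using nq rr by simp
    qed
  qed
  have B2: "\<forall>u\<in>S. rel P z u \<longrightarrow> u = z"
  proof (intro ballI impI)
    fix u assume u: "u \<in> S" "rel P z u"
    show "u = z"
    proof (rule ccontr)
      assume uz: "u \<noteq> z"
      have ux: "u \<noteq> x" using u(2) nPxz sym by metis
      have uy: "u \<noteq> y" using u(2) nPyz sym by metis
      have qzu: "rel Q z u" using agreeD[OF aPQ z u(1) zx ux] u(2) by simp
      have rzu: "rel R z u" using agreeD[OF aPR z u(1) zy uy] u(2) by simp
      have qxu: "rel Q x u" using rel_trans[OF Q Qxz qzu] .
      have ryu: "rel R y u" using rel_trans[OF R Ryz rzu] .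
      have "rel Q y u = rel R y u" using agreeD[OF aQR y u(1)] zy uz by auto
      hence "rel Q y u" using ryu by simp
      hence "rel Q x y" using rel_trans[OF Q qxu] sym by metis
      moreover have "\<not> rel Q x y" using mv_C1[OF PQ y xy[symmetric] Pxy] .
      ultimately show False by simp
    qed
  qed
  show ?thesis using zx zy Pxy nPxz nPyz Qxz Ryz B1 B2 by blast
qed

lemma Det:
  assumes P: "partition_on S P" and R1: "partition_on S R1" and R2: "partition_on S R2"
    and a1: "agree S y P R1" and a2: "agree S y P R2" and y: "y \<in> S"
    and u: "u \<in> S" "u \<noteq> y" and r1: "rel R1 y u" and r2: "rel R2 y u"
  shows "R1 = R2"
proof -
  have a12: "agree S y R1 R2" using agree_trans[OF agree_sym[OF a1] a2] .
  have side: "rel R1 y b = rel R2 y b" if "b \<in> S" for b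
  proof (cases "b = y")
    case True thus ?thesis using rel_refl[OF R1 y] rel_refl[OF R2 y] by simp
  next
    case False
    have "rel R1 y b = rel R1 u b" using rel_trans[OF R1] rel_sym r1 by metis
    also have "\<dots> = rel R2 u b" using agreeD[OF a12 u(1) that u(2) False] .
    also have "\<dots> = rel R2 y b" using rel_trans[OF R2] rel_sym r2 by metis
    finally show ?thesis .
  qed
  have "rel R1 a b = rel R2 a b" if "a \<in> S" "b \<in> S" for a b
  proof (cases "a = y")
    case True thus ?thesis using side[OF that(2)] by simp
  next
    case False
    show ?thesis
    proof (cases "b = y")
      case True thus ?thesis using side[OF that(1)] rel_sym by metis
    next
      case False2: False
      show ?thesis using agreeD[OF a12 that False False2] .
    qed
  qed
  thus ?thesis using rel_eq_imp_eq[OF R1 R2] by blast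
qed

lemma agree_refl: "agree S x P P"
  by (simp add: agree_def)

lemma clique_le:
  assumes fS: "finite S" and r1: "r \<ge> 1" and r2: "r = 2 \<Longrightarrow> card S \<ge> 4"
    and C: "C \<subseteq> {P. partition_on S P \<and> card P = r}"
    and cl: "\<forall>P\<in>C. \<forall>Q\<in>C. P \<noteq> Q \<longrightarrow> (\<exists>x\<in>S. agree S x P Q)"
  shows "card C \<le> r"
proof (rule ccontr)
  assume "\<not> ?thesis"
  hence big: "card C > r" by simp
  have fC: "finite C"
  proof -
    have "P \<subseteq> Pow S" if "P \<in> C" for P
    proof -
      have "partition_on S P" using C that by auto
      hence "\<Union>P = S" using partition_onD1 by metis
      thus ?thesis by auto
    qed
    hence "C \<subseteq> Pow (Pow S)" by auto
    thus ?thesis using fS by (meson finite_Pow_iff finite_subset)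
  qed
  have partC: "partition_on S P" "card P = r" if "P \<in> C" for P using C that by auto
  have mvI: "mv S r x P Q" if "P \<in> C" "Q \<in> C" "P \<noteq> Q" "x \<in> S" "agree S x P Q" for x P Q
    using that partC fS by (auto simp: mv_def)
  have two: "\<exists>Q\<in>C. Q \<noteq> P" if "P \<in> C" for P
  proof (rule ccontr)
    assume "\<not> ?thesis"
    hence "C \<subseteq> {P}" by blast
    hence "card C \<le> card {P}" by (intro card_mono) simp_all
    thus False using big r1 by simp
  qed
  have "C \<noteq> {}" using big by auto
  then obtain P where P: "P \<in> C" by auto
  show False
  proof (cases "\<exists>x\<in>S. \<forall>Q\<in>C. agree S x P Q")
    case True
    then obtain x where x: "x \<in> S" "\<forall>Q\<in>C. agree S x P Q" by blast
    define T where "T = S - {x}"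
    define phi where "phi = (\<lambda>Q. {u\<in>S. rel Q x u} \<inter> T)"
    have phi_in: "phi Q \<in> (\<lambda>B. B \<inter> T) ` P" if Q: "Q \<in> C" for Q
    proof -
      obtain Q' where Q': "Q' \<in> C" "Q' \<noteq> Q" using two[OF Q] by auto
      have "agree S x Q Q'" using agree_trans[OF agree_sym[OF x(2)[rule_format, OF Q]] x(2)[rule_format, OF Q'(1)]] .
      hence mQQ: "mv S r x Q Q'" by (rule mvI[OF Q Q'(1) Q'(2)[symmetric] x(1)])
      obtain u where u: "u \<in> S" "u \<noteq> x" "rel Q x u" using mv_C2[OF mQQ] by blast
      hence ne: "phi Q \<noteq> {}" by (auto simp: phi_def T_def)
      have "{u\<in>S. rel Q x u} \<in> Q" using block_in[OF partC(1)[OF Q] x(1)] .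
      hence "phi Q \<in> (\<lambda>B. B \<inter> T) ` Q" unfolding phi_def by (rule imageI)
      hence "phi Q \<in> restrict_partition Q T" using ne by (simp add: restrict_partition_def)
      also have "restrict_partition Q T = restrict_partition P T"
        using agree_iff[OF partC(1)[OF Q] partC(1)[OF P], of x] agree_sym[OF x(2)[rule_format, OF Q]]
        by (simp add: T_def)
      finally have "phi Q \<in> restrict_partition P T" .
      moreover have "restrict_partition P T \<subseteq> (\<lambda>B. B \<inter> T) ` P" by (simp add: restrict_partition_def)
      ultimately show ?thesis by (rule subsetD[rotated])
    qed
    have inj: "inj_on phi C"
    proof (rule inj_onI)
      fix Q1 Q2 assume h: "Q1 \<in> C" "Q2 \<in> C" "phi Q1 = phi Q2"
      obtain Q' where Q': "Q' \<in> C" "Q' \<noteq> Q1" using two[OF h(1)] by auto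
      have "agree S x Q1 Q'" using agree_trans[OF agree_sym[OF x(2)[rule_format, OF h(1)]] x(2)[rule_format, OF Q'(1)]] .
      hence mQQ: "mv S r x Q1 Q'" by (rule mvI[OF h(1) Q'(1) Q'(2)[symmetric] x(1)])
      obtain u where u: "u \<in> S" "u \<noteq> x" "rel Q1 x u" using mv_C2[OF mQQ] by blast
      hence "u \<in> phi Q1" by (simp add: phi_def T_def)
      hence "u \<in> phi Q2" using h(3) by simp
      hence "rel Q2 x u" by (simp add: phi_def)
      thus "Q1 = Q2" using Det[OF partC(1)[OF P] partC(1)[OF h(1)] partC(1)[OF h(2)]
          x(2)[rule_format, OF h(1)] x(2)[rule_format, OF h(2)] x(1) u] by simp
    qed
    have "card C \<le> card ((\<lambda>B. B \<inter> T) ` P)"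
    proof (rule card_inj_on_le[OF inj])
      show "phi ` C \<subseteq> (\<lambda>B. B \<inter> T) ` P" using phi_in by auto
      show "finite ((\<lambda>B. B \<inter> T) ` P)" using finite_partition[OF fS partC(1)[OF P]] by simp
    qed
    also have "\<dots> \<le> card P" by (rule card_image_le[OF finite_partition[OF fS partC(1)[OF P]]])
    finally show False using big partC(2)[OF P] by simp
  next
    case False
    hence ns: "\<forall>x\<in>S. \<exists>R\<in>C. \<not> agree S x P R" by blast
    obtain Q where Q: "Q \<in> C" "Q \<noteq> P" using two[OF P] by blast
    obtain x where x: "x \<in> S" "agree S x P Q" using cl P Q(1) Q(2)[symmetric] by blast
    obtain R where R: "R \<in> C" "\<not> agree S x P R" using ns x(1) by blast
    have RP: "R \<noteq> P" using R(2) agree_refl[of S x P] by blast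
    obtain y where y: "y \<in> S" "agree S y P R" using cl P R(1) RP[symmetric] by blast
    have xy: "x \<noteq> y" using R(2) y(2) by auto
    have QR: "Q \<noteq> R" using R(2) x(2) by auto
    obtain z where z: "z \<in> S" "agree S z Q R" using cl Q(1) R(1) QR by blast
    have mPQ: "mv S r x P Q" by (rule mvI[OF P Q(1) Q(2)[symmetric] x])
    have mPR: "mv S r y P R" by (rule mvI[OF P R(1) RP[symmetric] y])
    have mQR: "mv S r z Q R" by (rule mvI[OF Q(1) R(1) QR z])
    have N: "z \<noteq> x" "z \<noteq> y" "rel P x y" "\<not> rel P x z" "\<not> rel P y z" "rel Q x z" "rel R y z"
      "\<forall>u\<in>S. rel P x u \<longrightarrow> u = x \<or> u = y" "\<forall>u\<in>S. rel P z u \<longrightarrow> u = z"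
      using NS[OF mPQ mPR mQR xy] by simp_all
    have PP: "partition_on S P" "card P = r" using partC P by auto
    define Bx where "Bx = {u\<in>S. rel P x u}"
    define Bz where "Bz = {u\<in>S. rel P z u}"
    have Bx: "Bx \<in> P" using block_in[OF PP(1) x(1)] by (simp add: Bx_def)
    have Bz: "Bz \<in> P" using block_in[OF PP(1) z(1)] by (simp add: Bz_def)
    have xBx: "x \<in> Bx" using rel_refl[OF PP(1) x(1)] x(1) by (simp add: Bx_def)
    have "\<not> rel P z x"
    proof
      assume "rel P z x"
      hence "rel P x z" by (rule rel_sym)
      thus False using N(4) by simp
    qed
    hence xBz: "x \<notin> Bz" by (simp add: Bz_def)
    have BxBz: "Bx \<noteq> Bz" using xBx xBz by auto
    show False
    proof (cases "r \<le> 2")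
      case True
      have c2: "card {Bx, Bz} = 2" using BxBz by simp
      have sub: "{Bx, Bz} \<subseteq> P" using Bx Bz by simp
      have fP: "finite P" using finite_partition[OF fS PP(1)] .
      have "card {Bx, Bz} \<le> card P" by (rule card_mono[OF fP sub])
      hence r2': "r = 2" using True PP(2) c2 by simp
      have "P = {Bx, Bz}"
      proof (rule card_subset_eq[OF fP sub, symmetric])
        show "card {Bx, Bz} = card P" using c2 PP(2) r2' by simp
      qed
      hence "S = Bx \<union> Bz" using partition_onD1[OF PP(1)] by simp
      also have "\<dots> \<subseteq> {x, y, z}" using N(8,9) by (auto simp: Bx_def Bz_def)
      finally have "card S \<le> card {x, y, z}" by (intro card_mono) auto
      also have "card {x, y, z} \<le> 3" by (simp add: card_insert_if)
      finally have "card S \<le> 3" .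
      thus False using r2[OF r2'] by simp
    next
      case False
      hence c4: "card C \<ge> 4" using big by simp
      have c3: "card {P, Q, R} \<le> 3" by (simp add: card_insert_if)
      have "\<not> C \<subseteq> {P, Q, R}"
      proof
        assume "C \<subseteq> {P, Q, R}"
        hence "card C \<le> card {P, Q, R}" by (intro card_mono) simp_all
        thus False using c3 c4 by simp
      qed
      then obtain T where T: "T \<in> C" "T \<noteq> P" "T \<noteq> Q" "T \<noteq> R" by auto
      obtain w where w: "w \<in> S" "agree S w P T" using cl P T(1) T(2)[symmetric] by blast
      have mPT: "mv S r w P T" by (rule mvI[OF P T(1) T(2)[symmetric] w])
      show False
      proof (cases "w = x")
        case False
        obtain z1 where z1: "z1 \<in> S" "agree S z1 Q T" using cl Q(1) T(1) T(3)[symmetric] by blast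
        have mQT: "mv S r z1 Q T" by (rule mvI[OF Q(1) T(1) T(3)[symmetric] z1])
        have N1: "z1 \<noteq> x" "z1 \<noteq> w" "rel P x w" "rel Q x z1" "rel T w z1"
          using NS[OF mPQ mPT mQT False[symmetric]] by simp_all
        have "w = x \<or> w = y" using N(8) w(1) N1(3) by blast
        hence wy: "w = y" using False by simp
        have "rel Q z x" using N(6) by (rule rel_sym)
        hence "rel Q z z1" using rel_trans[OF partC(1)[OF Q(1)] _ N1(4)] by simp
        hence "rel P z z1" using agreeD[OF x(2) z(1) z1(1) N(1) N1(1)] by simp
        hence "z1 = z" using N(9) z1(1) by blast
        hence Tyz: "rel T y z" using N1(5) wy by simp
        have "R = T"
          by (rule Det[OF PP(1) partC(1)[OF R(1)] partC(1)[OF T(1)] y(2) _ y(1) z(1) N(2) N(7) Tyz])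
             (use w(2) wy in simp)
        thus False using T by simp
      next
        case True
        obtain z2 where z2: "z2 \<in> S" "agree S z2 R T" using cl R(1) T(1) T(4)[symmetric] by blast
        have mRT: "mv S r z2 R T" by (rule mvI[OF R(1) T(1) T(4)[symmetric] z2])
        have mPT': "mv S r x P T" using mPT True by simp
        have N2: "z2 \<noteq> y" "z2 \<noteq> x" "rel R y z2" "rel T x z2"
          using NS[OF mPR mPT' mRT xy[symmetric]] by simp_all
        have "rel R z y" using N(7) by (rule rel_sym)
        hence "rel R z z2" using rel_trans[OF partC(1)[OF R(1)] _ N2(3)] by simp
        hence "rel P z z2" using agreeD[OF y(2) z(1) z2(1) N(2) N2(1)] by simp
        hence "z2 = z" using N(9) z2(1) by blast
        hence Txz: "rel T x z" using N2(4) by simp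
        have "Q = T"
          by (rule Det[OF PP(1) partC(1)[OF Q(1)] partC(1)[OF T(1)] x(2) _ x(1) z(1) N(1) N(6) Txz])
             (use w(2) True in simp)
        thus False using T by simp
      qed
    qed
  qed
qed


lemma ins_partition:
  fixes Q :: "(real ^ 'd) set set"
  assumes TQ: "tverberg_partition A r Q" and x0: "x0 \<notin> A" and B: "B \<in> Q" and r1: "r \<ge> 1"
  shows "tverberg_partition (insert x0 A) r (insert (insert x0 B) (Q - {B}))"
proof -
  have Q: "partition_on A Q" "card Q = r" and hne: "(\<Inter>b\<in>Q. convex hull b) \<noteq> {}"
    using TQ by (auto simp: tverberg_partition_def partition_into_def)
  have notin: "x0 \<notin> b" if "b \<in> Q" for b using that x0 partition_onD1[OF Q(1)] by auto
  define P where "P = insert (insert x0 B) (Q - {B})"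
  have "partition_on (insert x0 A) P"
  proof (rule partition_onI)
    show "\<Union>P = insert x0 A" using partition_onD1[OF Q(1)] B by (auto simp: P_def)
    show "disjnt p q" if h: "p \<in> P" "q \<in> P" "p \<noteq> q" for p q
    proof -
      have dQ: "disjnt b b'" if "b \<in> Q" "b' \<in> Q" "b \<noteq> b'" for b b'
        using partition_onD2[OF Q(1)] that by (auto simp: disjoint_def disjnt_def)
      have dI: "disjnt (insert x0 B) b'" if "b' \<in> Q - {B}" for b'
        using dQ[OF B, of b'] notin[of b'] that by (auto simp: disjnt_def)
      show ?thesis
      proof (cases "p = insert x0 B")
        case True
        hence "q \<in> Q - {B}" using h by (auto simp: P_def)
        thus ?thesis using dI True by simp
      next
        case False
        hence p: "p \<in> Q - {B}" using h by (auto simp: P_def)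
        show ?thesis
        proof (cases "q = insert x0 B")
          case True thus ?thesis using dI[OF p] by (simp add: disjnt_sym)
        next
          case False
          hence "q \<in> Q - {B}" using h by (auto simp: P_def)
          thus ?thesis using dQ p h(3) by auto
        qed
      qed
    qed
    show "{} \<notin> P" using partition_onD3[OF Q(1)] by (auto simp: P_def)
  qed
  moreover have "card P = r"
  proof -
    have fQ: "finite Q" using Q(2) r1 card.infinite by fastforce
    have "insert x0 B \<notin> Q - {B}" using notin by auto
    hence "card P = Suc (card (Q - {B}))" using fQ by (simp add: P_def)
    also have "\<dots> = r" using Q(2) B fQ r1 by (simp add: card_Diff_singleton)
    finally show ?thesis .
  qed
  moreover have "(\<Inter>b\<in>P. convex hull b) \<noteq> {}"
  proof -
    obtain p where p: "p \<in> (\<Inter>b\<in>Q. convex hull b)" using hne by auto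
    have "convex hull B \<subseteq> convex hull (insert x0 B)" by (rule hull_mono) auto
    hence "p \<in> (\<Inter>b\<in>P. convex hull b)" using p B by (auto simp: P_def)
    thus ?thesis by auto
  qed
  ultimately show ?thesis unfolding P_def tverberg_partition_def partition_into_def by blast
qed

lemma ins_restrict:
  assumes Q: "partition_on A Q" and x0: "x0 \<notin> A" and B: "B \<in> Q"
  shows "restrict_partition (insert (insert x0 B) (Q - {B})) (insert x0 A - {x0}) = Q"
proof -
  have AA: "insert x0 A - {x0} = A" using x0 by auto
  have sub: "b \<subseteq> A" if "b \<in> Q" for b using that partition_onD1[OF Q] by auto
  have "(\<lambda>b. b \<inter> A) ` (insert (insert x0 B) (Q - {B})) = insert B ((\<lambda>b. b \<inter> A) ` (Q - {B}))"
    using sub[OF B] x0 by auto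
  also have "(\<lambda>b. b \<inter> A) ` (Q - {B}) = (\<lambda>b. b) ` (Q - {B})"
    by (rule image_cong, rule refl) (use sub in auto)
  finally have "(\<lambda>b. b \<inter> A) ` (insert (insert x0 B) (Q - {B})) = Q" using B by auto
  thus ?thesis using partition_onD3[OF Q] by (simp add: restrict_partition_def AA)
qed

theorem proposition3p4:
  fixes S :: "(real ^ 'd) set" and r :: nat
  assumes "r \<ge> 1"
    and "finite S"
    and "card S > Tv CARD('d) r"
  shows "clique_number (tverberg_vertices S r) (tverberg_adj S) = r"
proof -
  note r1 = assms(1) and fS = assms(2) and cS = assms(3)
  define V where "V = tverberg_vertices S r"
  define Cl where "Cl = {card C | C. C \<subseteq> V \<and> (\<forall>x\<in>C. \<forall>y\<in>C. x \<noteq> y \<longrightarrow> tverberg_adj S x y)}"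
  have Vpart: "partition_on S P \<and> card P = r" if "P \<in> V" for P
    using that by (auto simp: V_def tverberg_vertices_def tverberg_partition_def partition_into_def)
  have fV: "finite V"
  proof -
    have "P \<subseteq> Pow S" if "P \<in> V" for P
    proof -
      have "partition_on S P" using Vpart that by blast
      hence "\<Union>P = S" using partition_onD1 by metis
      thus ?thesis by auto
    qed
    hence "V \<subseteq> Pow (Pow S)" by auto
    thus ?thesis by (rule finite_subset) (simp add: fS)
  qed
  have fCl: "finite Cl"
  proof -
    have "Cl \<subseteq> card ` Pow V" by (auto simp: Cl_def)
    thus ?thesis using fV by (simp add: finite_subset)
  qed
  have upper: "k \<le> r" if kCl: "k \<in> Cl" for k
  proof -
    obtain C where C: "k = card C" "C \<subseteq> V" "\<forall>x\<in>C. \<forall>y\<in>C. x \<noteq> y \<longrightarrow> tverberg_adj S x y"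
      using kCl by (auto simp: Cl_def)
    have r2: "card S \<ge> 4" if "r = 2"
    proof -
      have c0: "CARD('d) > 0" by simp
      have "Tv CARD('d) r = CARD('d) + 2" using that by (simp add: Tv_def)
      thus ?thesis using cS c0 by linarith
    qed
    have Csub: "C \<subseteq> {P. partition_on S P \<and> card P = r}" using C(2) Vpart by auto
    have cl: "\<forall>P\<in>C. \<forall>Q\<in>C. P \<noteq> Q \<longrightarrow> (\<exists>x\<in>S. agree S x P Q)"
    proof (intro ballI impI)
      fix P Q assume h: "P \<in> C" "Q \<in> C" "P \<noteq> Q"
      have PQ: "partition_on S P" "partition_on S Q" using Csub h by auto
      have "tverberg_adj S P Q" using C(3) h by blast
      hence "\<exists>x\<in>S. restrict_partition P (S - {x}) = restrict_partition Q (S - {x})"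
        using dist_one[OF fS PQ] by (simp add: tverberg_adj_def)
      thus "\<exists>x\<in>S. agree S x P Q" using agree_iff[OF PQ] by blast
    qed
    show ?thesis using clique_le[OF fS r1 r2 Csub cl] C(1) by simp
  qed
  have lower: "r \<in> Cl"
  proof -
    have "S \<noteq> {}" using cS by auto
    then obtain x0 where x0: "x0 \<in> S" by auto
    define A where "A = S - {x0}"
    have fA: "finite A" using fS by (simp add: A_def)
    have cA: "card A \<ge> Tv CARD('d) r" using cS x0 fS by (simp add: A_def)
    obtain Q where TQ: "tverberg_partition A r Q" using tverberg[OF fA r1 cA] by blast
    have Q: "partition_on A Q" "card Q = r" using TQ by (auto simp: tverberg_partition_def partition_into_def)
    have fQ: "finite Q" using Q(2) r1 card.infinite by fastforce
    have x0A: "x0 \<notin> A" by (simp add: A_def)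
    have SA: "insert x0 A = S" using x0 by (auto simp: A_def)
    define ins where "ins = (\<lambda>B. insert (insert x0 B) (Q - {B}))"
    have notin: "x0 \<notin> b" if "b \<in> Q" for b using that x0A partition_onD1[OF Q(1)] by auto
    have insV: "ins B \<in> V" if "B \<in> Q" for B
      using ins_partition[OF TQ x0A that r1] SA by (simp add: V_def tverberg_vertices_def ins_def)
    have inj: "inj_on ins Q"
    proof (rule inj_onI)
      fix B1 B2 assume h: "B1 \<in> Q" "B2 \<in> Q" "ins B1 = ins B2"
      have "insert x0 B1 \<in> ins B1" by (simp add: ins_def)
      hence "insert x0 B1 \<in> ins B2" using h(3) by simp
      hence "insert x0 B1 = insert x0 B2 \<or> insert x0 B1 \<in> Q" unfolding ins_def by blast
      moreover have "insert x0 B1 \<notin> Q" using notin by auto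
      ultimately have "insert x0 B1 = insert x0 B2" by simp
      thus "B1 = B2" using notin[OF h(1)] notin[OF h(2)] by (metis insert_ident)
    qed
    define C where "C = ins ` Q"
    have "card C = r" using inj Q(2) by (simp add: C_def card_image)
    moreover have "C \<subseteq> V" using insV by (auto simp: C_def)
    moreover have "\<forall>x\<in>C. \<forall>y\<in>C. x \<noteq> y \<longrightarrow> tverberg_adj S x y"
    proof (intro ballI impI)
      fix P1 P2 assume h: "P1 \<in> C" "P2 \<in> C" "P1 \<noteq> P2"
      then obtain B1 B2 where B: "B1 \<in> Q" "B2 \<in> Q" "P1 = ins B1" "P2 = ins B2" by (auto simp: C_def)
      have PP: "partition_on S P1" "partition_on S P2" using insV B Vpart by auto
      have "restrict_partition P1 (S - {x0}) = Q" "restrict_partition P2 (S - {x0}) = Q"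
        using ins_restrict[OF Q(1) x0A B(1)] ins_restrict[OF Q(1) x0A B(2)] B SA by (simp_all add: ins_def)
      thus "tverberg_adj S P1 P2" using dist_one[OF fS PP] h(3) x0 by (auto simp: tverberg_adj_def)
    qed
    ultimately show ?thesis unfolding Cl_def by blast
  qed
  have "Max Cl = r" by (rule Max_eqI[OF fCl upper lower])
  thus ?thesis by (simp add: clique_number_def V_def Cl_def)
qed

end
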